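(* Let $p>3$ be a prime and $E$ a supersingular elliptic curve over $\mathbb{F}_{p^2}$ whose endomorphism ring corresponds under the Brandt--Sohn correspondence to a ternary quadratic form $F$ of discriminant $p$ (i.e. $\operatorname{End}(E)\cong\operatorname{Clf}^0(F)$). Let $c$ be a prime with $c<3p/16$. Then $F$ properly represents $2c$ if and only if $E$ is $\mathbb{Z}[\sqrt{-cp}]$-oriented or $\mathbb{Z}[\frac{1+\sqrt{-cp}}{2}]$-oriented.
   Context: For an imaginary quadratic order $O$, $E$ is $O$-oriented if there is an injective ring homomorphism $O\hookrightarrow\operatorname{End}(E)$ (for $O=\mathbb{Z}[\sqrt{-cp}]$ or $\mathbb{Z}[\frac{1+\sqrt{-cp}}2]$ this is equivalent to the existence of a $c$-isogeny $E\to E^p$, where $E^p$ is obtained by raising the coefficients of $E$ to the $p$-th power). Write $F(x,y,z)=2ax^2+2by^2+2cz^2+2uyz+2vxz+2wxy$ (integers), with discriminant $4abc+uvw-au^2-bv^2-cw^2$. $\operatorname{Clf}^0(F)=\mathbb{Z}+\mathbb{Z}i+\mathbb{Z}j+\mathbb{Z}k\subset B_{p,\infty}$ with $i^2=ui-bc$, $j^2=vj-ac$, $k^2=wk-ab$, $jk=a(u-i)$, $ki=b(v-j)$, $ij=c(w-k)$; $B_{p,\infty}$ is the quaternion algebra over $\mathbb{Q}$ ramified exactly at $p,\infty$. $F$ properly represents $n$ if $F(v)=n$ for some $v\in\mathbb{Z}^3$ with coprime entries. *)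

theory Defs
  imports Complex_Main "HOL-Computational_Algebra.Primes"
begin

type_synonym tform = "int \<times> int \<times> int \<times> int \<times> int \<times> int"

fun tform_eval :: "tform \<Rightarrow> int \<Rightarrow> int \<Rightarrow> int \<Rightarrow> int" where
  "tform_eval (a,b,c,u,v,w) x y z =
     2*a*x^2 + 2*b*y^2 + 2*c*z^2 + 2*u*y*z + 2*v*x*z + 2*w*x*y"

fun tform_disc :: "tform \<Rightarrow> int" where
  "tform_disc (a,b,c,u,v,w) = 4*a*b*c + u*v*w - a*u^2 - b*v^2 - c*w^2"

definition tform_pos_def :: "tform \<Rightarrow> bool" where
  "tform_pos_def F \<longleftrightarrow> (\<forall>x y z. (x,y,z) \<noteq> (0,0,0) \<longrightarrow> tform_eval F x y z > 0)"

definition properly_represents :: "tform \<Rightarrow> int \<Rightarrow> bool" where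
  "properly_represents F n \<longleftrightarrow>
     (\<exists>x y z. gcd x (gcd y z) = 1 \<and> tform_eval F x y z = n)"

text \<open>The even Clifford algebra Clf^0(F) = Z + Zi + Zj + Zk, elements written as
  coordinate tuples (t0,t1,t2,t3) = t0 + t1 i + t2 j + t3 k, with the multiplication
  determined by i^2 = ui - bc, j^2 = vj - ac, k^2 = wk - ab, jk = a(u-i),
  ki = b(v-j), ij = c(w-k) (and the resulting kj, ik, ji).\<close>

type_synonym clf = "int \<times> int \<times> int \<times> int"

definition clf_one :: clf where "clf_one = (1,0,0,0)"

fun clf_add :: "clf \<Rightarrow> clf \<Rightarrow> clf" where
  "clf_add (x0,x1,x2,x3) (y0,y1,y2,y3) = (x0+y0, x1+y1, x2+y2, x3+y3)"

fun clf_mul :: "tform \<Rightarrow> clf \<Rightarrow> clf \<Rightarrow> clf" where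
  "clf_mul (a,b,c,u,v,w) (x0,x1,x2,x3) (y0,y1,y2,y3) =
    (let
       \<comment> \<open>products of basis elements, as coordinate tuples\<close>
       ii = (-b*c, u, 0, 0); jj = (-a*c, 0, v, 0); kk = (-a*b, 0, 0, w);
       jk = (a*u, -a, 0, 0); ki = (b*v, 0, -b, 0); ij = (c*w, 0, 0, -c);
       kj = (-v*w, a, w, v); ik = (-u*w, w, b, u); ji = (-u*v, v, u, c);
       sc = (\<lambda>s (t0::int,t1::int,t2::int,t3::int). (s*t0, s*t1, s*t2, s*t3))
     in foldr clf_add
       [ (x0*y0, x0*y1 + x1*y0, x0*y2 + x2*y0, x0*y3 + x3*y0),
         sc (x1*y1) ii, sc (x2*y2) jj, sc (x3*y3) kk,
         sc (x2*y3) jk, sc (x3*y1) ki, sc (x1*y2) ij,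
         sc (x3*y2) kj, sc (x1*y3) ik, sc (x2*y1) ji ] (0,0,0,0))"

text \<open>An imaginary quadratic order R (given as a subset of C) is oriented into
  Clf^0(F) (i.e. the curve E with End(E) = Clf^0(F) is R-oriented) iff R is a ring
  and there is an injective unital ring homomorphism R \<hookrightarrow> Clf^0(F).\<close>

definition clf_oriented :: "tform \<Rightarrow> complex set \<Rightarrow> bool" where
  "clf_oriented F R \<longleftrightarrow>
     (1 \<in> R \<and> (\<forall>x\<in>R. \<forall>y\<in>R. x + y \<in> R \<and> x * y \<in> R \<and> - x \<in> R)) \<and>
     (\<exists>f :: complex \<Rightarrow> clf. inj_on f R \<and> f 1 = clf_one \<and>
        (\<forall>x\<in>R. \<forall>y\<in>R. f (x + y) = clf_add (f x) (f y) \<and> f (x * y) = clf_mul F (f x) (f y)))"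

definition order_sqrt :: "nat \<Rightarrow> complex set" where
  "order_sqrt n = {of_int x + of_int y * (\<i> * of_real (sqrt (real n))) | x y. True}"

definition order_half :: "nat \<Rightarrow> complex set" where
  "order_half n = {of_int x + of_int y * ((1 + \<i> * of_real (sqrt (real n))) / 2) | x y. True}"

end

theory Submission
  imports Defs
begin

lemma clf_sq: "clf_mul (a,b,c,u,v,w) (s,t1,t2,t3) (s,t1,t2,t3) = (s*s - (b*c*t1^2+a*c*t2^2+a*b*t3^2+t1*t2*(u*v-c*w)+t2*t3*(v*w-a*u)+t1*t3*(u*w-b*v)), t1*(2*s+(u*t1+v*t2+w*t3)), t2*(2*s+(u*t1+v*t2+w*t3)), t3*(2*s+(u*t1+v*t2+w*t3)))"
  by (simp add: Let_def algebra_simps power2_eq_square)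

lemma clf_lin: "clf_mul (a,b,c,u,v,w) (x + y*s, y*ka, y*kb, y*kc) (x' + y'*s, y'*ka, y'*kb, y'*kc) =
  (x*x' + (x*y'+x'*y)*s + y*y'*(s*s - (b*c*ka^2+a*c*kb^2+a*b*kc^2+ka*kb*(u*v-c*w)+kb*kc*(v*w-a*u)+ka*kc*(u*w-b*v))),
   (x*y'+x'*y)*ka + y*y'*(ka*(2*s+(u*ka+v*kb+w*kc))),
   (x*y'+x'*y)*kb + y*y'*(kb*(2*s+(u*ka+v*kb+w*kc))),
   (x*y'+x'*y)*kc + y*y'*(kc*(2*s+(u*ka+v*kb+w*kc))))"
  by (simp add: Let_def algebra_simps power2_eq_square)

lemma par: fixes a b c u v w x y z :: int
  assumes "odd (4*a*b*c + u*v*w - a*u^2 - b*v^2 - c*w^2)" "even (w*y+v*z)" "even (w*x+u*z)" "even (v*x+u*y)"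
   "even (a*x^2+b*y^2+c*z^2+u*y*z+v*x*z+w*x*y)" shows "even x \<and> even y \<and> even z"
  using assms by (cases "even x"; cases "even y"; cases "even z"; cases "even u"; cases "even v"; cases "even w"; auto simp: power2_eq_square)


lemma proper_of:
  fixes a b c u v w x y z :: int and q :: nat
  assumes q: "prime q" and e: "tform_eval (a,b,c,u,v,w) x y z = 2 * int q"
  shows "properly_represents (a,b,c,u,v,w) (2*int q)"
proof -
  define g where "g = gcd x (gcd y z)"
  have g0: "g \<ge> 0" by (simp add: g_def)
  obtain x' where x: "x = g*x'" unfolding g_def by (meson dvd_def gcd_dvd1)
  obtain y' where y: "y = g*y'" unfolding g_def by (meson dvd_def gcd_dvd1 gcd_dvd2 dvd_trans)
  obtain z' where z: "z = g*z'" unfolding g_def by (meson dvd_def gcd_dvd2 dvd_trans)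
  define E where "E = a*x'^2 + b*y'^2 + c*z'^2 + u*y'*z' + v*x'*z' + w*x'*y'"
  have "tform_eval (a,b,c,u,v,w) x y z = g^2 * (2*E)"
    unfolding x y z E_def by (simp add: algebra_simps power2_eq_square)
  with e have qe: "int q = g^2 * E" by simp
  have pq: "prime (int q)" using q by simp
  have "g^2 dvd int q" using qe by simp
  hence g2: "g^2 = 1 \<or> g^2 = int q" using pq g0 by (simp add: prime_int_iff)
  have "g dvd int q" using qe by (simp add: power2_eq_square)
  hence g1: "g = 1 \<or> g = int q" using pq g0 by (simp add: prime_int_iff)
  have q1: "int q > 1" using pq prime_gt_1_int by blast
  have "g = 1"
  proof (rule ccontr)
    assume "g \<noteq> 1"
    hence "g = int q" using g1 by simp
    with q1 have "g * 1 < g * g" by (intro mult_strict_left_mono) auto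
    hence "g^2 > g" by (simp add: power2_eq_square)
    have "g^2 \<noteq> 1" "g^2 \<noteq> int q" using \<open>g^2 > g\<close> \<open>g = int q\<close> q1 by linarith+
    with g2 show False by blast
  qed
  thus ?thesis unfolding properly_represents_def g_def using e
    by (intro exI[of _ x] exI[of _ y] exI[of _ z]) auto
qed

lemma idW:
  fixes a b c u v w x y z :: int
  defines "D \<equiv> 4*a*b*c + u*v*w - a*u^2 - b*v^2 - c*w^2"
  and "N \<equiv> 4*(b*c*x^2+a*c*y^2+a*b*z^2+x*y*(u*v-c*w)+y*z*(v*w-a*u)+x*z*(u*w-b*v)) - (u*x+v*y+w*z)^2"
  and "W1 \<equiv> (4*b*c-u^2)*x + (u*v-2*c*w)*y + (u*w-2*b*v)*z"
  and "W2 \<equiv> (u*v-2*c*w)*x + (4*a*c-v^2)*y + (v*w-2*a*u)*z"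
  and "W3 \<equiv> (u*w-2*b*v)*x + (v*w-2*a*u)*y + (4*a*b-w^2)*z"
  shows "W1^2 = (4*b*c-u^2)*N - 2*D*(2*c*y^2 - 2*u*y*z + 2*b*z^2)"
    "W2^2 = (4*a*c-v^2)*N - 2*D*(2*c*x^2 - 2*v*x*z + 2*a*z^2)"
    "W3^2 = (4*a*b-w^2)*N - 2*D*(2*b*x^2 - 2*w*x*y + 2*a*y^2)"
    "tform_eval (a,b,c,u,v,w) W1 W2 W3 = 2*D*N"
    "2*a*W1 + w*W2 + v*W3 = 2*D*x"
    "w*W1 + 2*b*W2 + u*W3 = 2*D*y"
    "v*W1 + u*W2 + 2*c*W3 = 2*D*z"
  unfolding assms by (simp_all add: algebra_simps power2_eq_square)

lemma fin:
  fixes a b c u v w t1 t2 t3 N :: int and p q :: nat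
  assumes p: "prime p" "p > 2" and q: "prime q"
  and D: "4*a*b*c + u*v*w - a*u^2 - b*v^2 - c*w^2 = int p"
  and N: "N = 4*(b*c*t1^2+a*c*t2^2+a*b*t3^2+t1*t2*(u*v-c*w)+t2*t3*(v*w-a*u)+t1*t3*(u*w-b*v)) - (u*t1+v*t2+w*t3)^2"
  and Nc: "N = int q * int p \<or> N = 4 * (int q * int p)"
  shows "properly_represents (a,b,c,u,v,w) (2*int q)"
proof -
  define W1 where "W1 = (4*b*c-u^2)*t1 + (u*v-2*c*w)*t2 + (u*w-2*b*v)*t3"
  define W2 where "W2 = (u*v-2*c*w)*t1 + (4*a*c-v^2)*t2 + (v*w-2*a*u)*t3"
  define W3 where "W3 = (u*w-2*b*v)*t1 + (v*w-2*a*u)*t2 + (4*a*b-w^2)*t3"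
  note ids = idW[where a=a and b=b and c=c and u=u and v=v and w=w and x=t1 and y=t2 and z=t3, folded W1_def W2_def W3_def N, unfolded D]
  have pp: "prime (int p)" using p by simp
  have pN: "int p dvd N" using Nc by auto
  have "int p dvd W1^2" unfolding ids(1) using pN by simp
  hence "int p dvd W1" using pp prime_dvd_power by blast
  then obtain V1 where V1: "W1 = int p * V1" by blast
  have "int p dvd W2^2" unfolding ids(2) using pN by simp
  hence "int p dvd W2" using pp prime_dvd_power by blast
  then obtain V2 where V2: "W2 = int p * V2" by blast
  have "int p dvd W3^2" unfolding ids(3) using pN by simp
  hence "int p dvd W3" using pp prime_dvd_power by blast
  then obtain V3 where V3: "W3 = int p * V3" by blast
  have p0: "int p \<noteq> 0" using p by simp
  have "tform_eval (a,b,c,u,v,w) W1 W2 W3 = (int p)^2 * tform_eval (a,b,c,u,v,w) V1 V2 V3"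
    unfolding V1 V2 V3 by (simp add: algebra_simps power2_eq_square)
  with ids(4) have "int p * (int p * tform_eval (a,b,c,u,v,w) V1 V2 V3) = int p * (2 * N)"
    by (simp add: power2_eq_square algebra_simps)
  hence ev0: "int p * tform_eval (a,b,c,u,v,w) V1 V2 V3 = 2 * N" using p0 by simp
  obtain E where E: "tform_eval (a,b,c,u,v,w) V1 V2 V3 = E" by simp
  have ev: "int p * E = 2 * N" using ev0 E by simp
  show ?thesis using Nc
  proof
    assume "N = int q * int p"
    with ev have "int p * E = int p * (2 * int q)" by (simp add: algebra_simps)
    with p0 E have "tform_eval (a,b,c,u,v,w) V1 V2 V3 = 2 * int q" by simp
    thus ?thesis using proper_of q by blast
  next
    assume N4: "N = 4 * (int q * int p)"
    with ev have "int p * E = int p * (8 * int q)" by (simp add: algebra_simps)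
    with p0 E have ev8: "tform_eval (a,b,c,u,v,w) V1 V2 V3 = 8 * int q" by simp
    have m1: "int p * (2*a*V1 + w*V2 + v*V3) = int p * (2*t1)" using ids(5) unfolding V1 V2 V3 by (simp add: algebra_simps)
    have m2: "int p * (w*V1 + 2*b*V2 + u*V3) = int p * (2*t2)" using ids(6) unfolding V1 V2 V3 by (simp add: algebra_simps)
    have m3: "int p * (v*V1 + u*V2 + 2*c*V3) = int p * (2*t3)" using ids(7) unfolding V1 V2 V3 by (simp add: algebra_simps)
    from m1 p0 have "2*a*V1 + w*V2 + v*V3 = 2*t1" by simp
    hence "w*V2 + v*V3 = 2*(t1 - a*V1)" by (simp add: algebra_simps)
    hence e1: "even (w*V2 + v*V3)" by simp
    from m2 p0 have "w*V1 + 2*b*V2 + u*V3 = 2*t2" by simp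
    hence "w*V1 + u*V3 = 2*(t2 - b*V2)" by (simp add: algebra_simps)
    hence e2: "even (w*V1 + u*V3)" by simp
    from m3 p0 have "v*V1 + u*V2 + 2*c*V3 = 2*t3" by simp
    hence "v*V1 + u*V2 = 2*(t3 - c*V3)" by (simp add: algebra_simps)
    hence e3: "even (v*V1 + u*V2)" by simp
    define K where "K = a*V1^2+b*V2^2+c*V3^2+u*V2*V3+v*V1*V3+w*V1*V2"
    have "2 * K = 2 * (4 * int q)"
      using ev8 unfolding K_def by (simp add: algebra_simps power2_eq_square)
    hence "K = 2 * (2 * int q)" by simp
    hence e4: "even (a*V1^2+b*V2^2+c*V3^2+u*V2*V3+v*V1*V3+w*V1*V2)" unfolding K_def[symmetric] by simp
    have "odd p" using p prime_odd_nat by blast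
    hence e0: "odd (4*a*b*c + u*v*w - a*u^2 - b*v^2 - c*w^2)" unfolding D by simp
    from par[OF e0 e1 e2 e3 e4] obtain U1 U2 U3 where "V1 = 2*U1" "V2 = 2*U2" "V3 = 2*U3" by (meson evenE)
    with ev8 have "4 * tform_eval (a,b,c,u,v,w) U1 U2 U3 = 4 * (2 * int q)"
      by (simp add: algebra_simps power2_eq_square)
    hence "tform_eval (a,b,c,u,v,w) U1 U2 U3 = 2 * int q" by simp
    thus ?thesis using proper_of q by blast
  qed
qed



lemma hom_int:
  fixes f :: "complex \<Rightarrow> clf" and R :: "complex set"
  assumes R1: "1 \<in> R" and Rc: "\<forall>x\<in>R. \<forall>y\<in>R. x + y \<in> R \<and> x * y \<in> R \<and> - x \<in> R"
  and f1: "f 1 = clf_one" and fadd: "\<forall>x\<in>R. \<forall>y\<in>R. f (x + y) = clf_add (f x) (f y)"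
  shows "of_int k \<in> R \<and> f (of_int k) = (k,0,0,0)"
proof -
  have m1: "-1 \<in> R" using R1 Rc by blast
  have z: "0 \<in> R" using Rc R1 m1 by (metis add.right_inverse)
  obtain a0 a1 a2 a3 where fz: "f 0 = (a0,a1,a2,a3)" by (cases "f 0") auto
  have "f (0 + 0) = clf_add (f 0) (f 0)" using fadd z by blast
  hence f0: "f 0 = (0,0,0,0)" using fz by simp
  show ?thesis
  proof (induction k rule: int_induct[where k=0])
    case base
    then show ?case using z f0 by simp
  next
    case (step1 i)
    have e: "(of_int (i+1) :: complex) = of_int i + 1" by simp
    have "of_int i + 1 \<in> R" using step1 R1 Rc by blast
    moreover have "f (of_int i + 1) = clf_add (f (of_int i)) (f 1)" using fadd step1 R1 by blast
    ultimately show ?case using e step1 f1 by (simp add: clf_one_def)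
  next
    case (step2 i)
    have e: "(of_int (i-1) :: complex) = of_int i + -1" by simp
    have mem: "of_int i + -1 \<in> R" using step2 m1 Rc by blast
    have e2: "(of_int i :: complex) = (of_int i + -1) + 1" by simp
    have "f (of_int i) = clf_add (f (of_int i + -1)) (f 1)" using fadd mem R1 e2 by metis
    moreover obtain b0 b1 b2 b3 where "f (of_int i + -1) = (b0,b1,b2,b3)" by (cases "f (of_int i + -1)") auto
    ultimately show ?case using e mem step2 f1 by (auto simp: clf_one_def)
  qed
qed

lemma bwd_sqrt:
  fixes a b c u v w :: int and n :: nat
  assumes n: "n > 0" and O: "clf_oriented (a,b,c,u,v,w) (order_sqrt n)"
  shows "\<exists>t1 t2 t3. 4*(b*c*t1^2+a*c*t2^2+a*b*t3^2+t1*t2*(u*v-c*w)+t2*t3*(v*w-a*u)+t1*t3*(u*w-b*v)) - (u*t1+v*t2+w*t3)^2 = 4 * int n"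
proof -
  define R where "R = order_sqrt n"
  define r where "r = sqrt (real n)"
  have r0: "r > 0" using n by (simp add: r_def)
  define \<omega> where "\<omega> = \<i> * complex_of_real r"
  from O obtain f where R1: "1 \<in> R" and Rc: "\<forall>x\<in>R. \<forall>y\<in>R. x + y \<in> R \<and> x * y \<in> R \<and> - x \<in> R"
    and inj: "inj_on f R" and f1: "f 1 = clf_one"
    and fh: "\<forall>x\<in>R. \<forall>y\<in>R. f (x + y) = clf_add (f x) (f y) \<and> f (x * y) = clf_mul (a,b,c,u,v,w) (f x) (f y)"
    unfolding clf_oriented_def R_def by blast
  have fadd: "\<forall>x\<in>R. \<forall>y\<in>R. f (x + y) = clf_add (f x) (f y)" using fh by blast
  note hi = hom_int[OF R1 Rc f1 fadd]
  have wR: "\<omega> \<in> R" unfolding R_def order_sqrt_def \<omega>_def r_def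
    by (rule CollectI, rule exI[of _ 0], rule exI[of _ 1]) simp
  have ww: "\<omega> * \<omega> = of_int (- int n)"
    unfolding \<omega>_def r_def by (simp add: complex_eq_iff)
  obtain s t1 t2 t3 where g: "f \<omega> = (s,t1,t2,t3)" by (cases "f \<omega>") auto
  have "f (\<omega> * \<omega>) = clf_mul (a,b,c,u,v,w) (f \<omega>) (f \<omega>)" using fh wR by blast
  hence sq: "clf_mul (a,b,c,u,v,w) (s,t1,t2,t3) (s,t1,t2,t3) = (- int n, 0, 0, 0)"
    using hi[of "- int n"] ww g by simp
  have tnz: "\<not> (t1 = 0 \<and> t2 = 0 \<and> t3 = 0)"
  proof
    assume "t1 = 0 \<and> t2 = 0 \<and> t3 = 0"
    hence "f \<omega> = f (of_int s)" using g hi[of s] by simp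
    hence "\<omega> = of_int s" using inj wR hi[of s] by (meson inj_on_def)
    hence "Im \<omega> = 0" by simp
    thus False using r0 unfolding \<omega>_def by simp
  qed
  from sq[unfolded clf_sq] have e0: "s*s - (b*c*t1^2+a*c*t2^2+a*b*t3^2+t1*t2*(u*v-c*w)+t2*t3*(v*w-a*u)+t1*t3*(u*w-b*v)) = - int n"
    and "t1*(2*s+(u*t1+v*t2+w*t3)) = 0" "t2*(2*s+(u*t1+v*t2+w*t3)) = 0" "t3*(2*s+(u*t1+v*t2+w*t3)) = 0"
    by simp_all
  with tnz have T: "u*t1+v*t2+w*t3 = -2*s" by auto
  show ?thesis
    by (rule exI[of _ t1], rule exI[of _ t2], rule exI[of _ t3], unfold T)
       (use e0 in \<open>simp add: algebra_simps power2_eq_square\<close>)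
qed

lemma bwd_half:
  fixes a b c u v w :: int and n :: nat
  assumes n: "n > 0" and O: "clf_oriented (a,b,c,u,v,w) (order_half n)"
  shows "\<exists>t1 t2 t3. 4*(b*c*t1^2+a*c*t2^2+a*b*t3^2+t1*t2*(u*v-c*w)+t2*t3*(v*w-a*u)+t1*t3*(u*w-b*v)) - (u*t1+v*t2+w*t3)^2 = int n"
proof -
  define R where "R = order_half n"
  define r where "r = sqrt (real n)"
  have r0: "r > 0" using n by (simp add: r_def)
  have rr: "r * r = real n" by (simp add: r_def)
  define \<omega> where "\<omega> = (1 + \<i> * complex_of_real r) / 2"
  from O obtain f where R1: "1 \<in> R" and Rc: "\<forall>x\<in>R. \<forall>y\<in>R. x + y \<in> R \<and> x * y \<in> R \<and> - x \<in> R"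
    and inj: "inj_on f R" and f1: "f 1 = clf_one"
    and fh: "\<forall>x\<in>R. \<forall>y\<in>R. f (x + y) = clf_add (f x) (f y) \<and> f (x * y) = clf_mul (a,b,c,u,v,w) (f x) (f y)"
    unfolding clf_oriented_def R_def by blast
  have fadd: "\<forall>x\<in>R. \<forall>y\<in>R. f (x + y) = clf_add (f x) (f y)" using fh by blast
  note hi = hom_int[OF R1 Rc f1 fadd]
  have wR: "\<omega> \<in> R" unfolding R_def order_half_def \<omega>_def r_def
    by (rule CollectI, rule exI[of _ 0], rule exI[of _ 1]) simp
  have "\<omega> * \<omega> \<in> R" using wR Rc by blast
  then obtain X Y where XY: "\<omega> * \<omega> = of_int X + of_int Y * \<omega>"
    unfolding R_def order_half_def \<omega>_def r_def by blast
  have im1: "Im (\<omega> * \<omega>) = r / 2" and re1: "Re (\<omega> * \<omega>) = (1 - r*r) / 4"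
    unfolding \<omega>_def by (simp_all add: field_simps)
  have im2: "Im (of_int X + of_int Y * \<omega>) = Y * r / 2" and re2: "Re (of_int X + of_int Y * \<omega>) = X + Y / 2"
    unfolding \<omega>_def by simp_all
  have A: "Im (\<omega> * \<omega>) = Im (of_int X + of_int Y * \<omega>)" "Re (\<omega> * \<omega>) = Re (of_int X + of_int Y * \<omega>)"
    using XY by simp_all
  have i1: "r / 2 = Y * r / 2" using A(1) unfolding im1 im2 .
  have i2: "(1 - r*r)/4 = X + Y/2" using A(2) unfolding re1 re2 .
  from i1 r0 have Y1: "Y = 1" by simp
  with i2 rr have "(1 - real n)/4 = X + 1/2" by simp
  hence "real_of_int (4 * X) = real_of_int (- 1 - int n)" by simp
  hence Xn: "4 * X = - 1 - int n" using of_int_eq_iff by blast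
  have ww: "\<omega> * \<omega> = of_int X + \<omega>" using XY Y1 by simp
  obtain s t1 t2 t3 where g: "f \<omega> = (s,t1,t2,t3)" by (cases "f \<omega>") auto
  have "f (\<omega> * \<omega>) = clf_mul (a,b,c,u,v,w) (f \<omega>) (f \<omega>)" using fh wR by blast
  moreover have "f (of_int X + \<omega>) = clf_add (f (of_int X)) (f \<omega>)" using fadd wR hi[of X] by blast
  ultimately have sq: "clf_mul (a,b,c,u,v,w) (s,t1,t2,t3) (s,t1,t2,t3) = (X + s, t1, t2, t3)"
    using hi[of X] ww g by simp
  have tnz: "\<not> (t1 = 0 \<and> t2 = 0 \<and> t3 = 0)"
  proof
    assume "t1 = 0 \<and> t2 = 0 \<and> t3 = 0"
    hence "f \<omega> = f (of_int s)" using g hi[of s] by simp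
    hence "\<omega> = of_int s" using inj wR hi[of s] by (meson inj_on_def)
    hence "Im \<omega> = 0" by simp
    thus False using r0 unfolding \<omega>_def by simp
  qed
  from sq[unfolded clf_sq] have e0: "s*s - (b*c*t1^2+a*c*t2^2+a*b*t3^2+t1*t2*(u*v-c*w)+t2*t3*(v*w-a*u)+t1*t3*(u*w-b*v)) = X + s"
    and "t1*(2*s+(u*t1+v*t2+w*t3)) = t1" "t2*(2*s+(u*t1+v*t2+w*t3)) = t2" "t3*(2*s+(u*t1+v*t2+w*t3)) = t3"
    by simp_all
  with tnz have T: "u*t1+v*t2+w*t3 = 1 - 2*s"
    by (metis add_diff_cancel_left' mult.right_neutral mult_cancel_left)
  show ?thesis
    by (rule exI[of _ t1], rule exI[of _ t2], rule exI[of _ t3], unfold T)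
       (use e0 Xn in \<open>simp add: algebra_simps power2_eq_square\<close>)
qed



lemma idM:
  fixes a b c u v w x y z :: int
  defines "t1 \<equiv> 2*a*x+w*y+v*z" and "t2 \<equiv> w*x+2*b*y+u*z" and "t3 \<equiv> v*x+u*y+2*c*z"
  and "D \<equiv> 4*a*b*c + u*v*w - a*u^2 - b*v^2 - c*w^2"
  shows "4*(b*c*t1^2+a*c*t2^2+a*b*t3^2+t1*t2*(u*v-c*w)+t2*t3*(v*w-a*u)+t1*t3*(u*w-b*v)) - (u*t1+v*t2+w*t3)^2 = 2*D*tform_eval (a,b,c,u,v,w) x y z"
   "(4*b*c-u^2)*t1+(u*v-2*c*w)*t2+(u*w-2*b*v)*t3 = 2*D*x"
   "(u*v-2*c*w)*t1+(4*a*c-v^2)*t2+(v*w-2*a*u)*t3 = 2*D*y"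
   "(u*w-2*b*v)*t1+(v*w-2*a*u)*t2+(4*a*b-w^2)*t3 = 2*D*z"
  unfolding assms by (simp_all add: algebra_simps power2_eq_square)

lemma fwd:
  fixes a b c u v w x y z :: int and p q :: nat
  assumes D: "4*a*b*c + u*v*w - a*u^2 - b*v^2 - c*w^2 = int p"
  and e: "tform_eval (a,b,c,u,v,w) x y z = 2 * int q" and p0: "p > 0" and q0: "q > 0"
  shows "clf_oriented (a,b,c,u,v,w) (order_sqrt (q*p))"
proof -
  define n where "n = q * p"
  have n0: "n > 0" using p0 q0 by (simp add: n_def)
  define t1 where "t1 = 2*a*x+w*y+v*z"
  define t2 where "t2 = w*x+2*b*y+u*z"
  define t3 where "t3 = v*x+u*y+2*c*z"
  define T where "T = u*t1+v*t2+w*t3"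
  define nr where "nr = b*c*t1^2+a*c*t2^2+a*b*t3^2+t1*t2*(u*v-c*w)+t2*t3*(v*w-a*u)+t1*t3*(u*w-b*v)"
  note ids = idM[where a=a and b=b and c=c and u=u and v=v and w=w and x=x and y=y and z=z,
      folded t1_def t2_def t3_def, unfolded D e, folded T_def nr_def]
  have TT: "T^2 = 4 * (nr - int n)" using ids(1) by (simp add: n_def algebra_simps)
  hence "even (T^2)" by simp
  hence "even T" by simp
  then obtain h where h: "T = 2*h" by blast
  define s where "s = - h"
  have hs: "s*s - nr = - int n" using TT unfolding h s_def by (simp add: power2_eq_square algebra_simps)
  have Ts: "2*s + T = 0" unfolding s_def h by simp
  have tnz: "\<not> (t1 = 0 \<and> t2 = 0 \<and> t3 = 0)"
  proof
    assume t0: "t1 = 0 \<and> t2 = 0 \<and> t3 = 0"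
    hence "2*int p*x = 0" "2*int p*y = 0" "2*int p*z = 0" using ids(2-4) by simp_all
    hence "x = 0" "y = 0" "z = 0" using p0 by simp_all
    thus False using e q0 by simp
  qed
  define r where "r = sqrt (real n)"
  have r0: "r > 0" using n0 by (simp add: r_def)
  define \<omega> where "\<omega> = \<i> * complex_of_real r"
  have ww: "\<omega> * \<omega> = - of_nat n" unfolding \<omega>_def r_def by (simp add: complex_eq_iff)
  define R where "R = order_sqrt n"
  have Rd: "R = {of_int X + of_int Y * \<omega> | X Y. True}"
    unfolding R_def order_sqrt_def \<omega>_def r_def n_def ..
  define f where "f = (\<lambda>z::complex. (\<lfloor>Re z\<rfloor> + \<lfloor>Im z / r\<rfloor> * s, \<lfloor>Im z / r\<rfloor> * t1, \<lfloor>Im z / r\<rfloor> * t2, \<lfloor>Im z / r\<rfloor> * t3))"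
  have fev: "f (of_int X + of_int Y * \<omega>) = (X + Y*s, Y*t1, Y*t2, Y*t3)" for X Y
    unfolding f_def \<omega>_def using r0 by simp
  have prod: "(of_int X + of_int Y * \<omega>) * (of_int X' + of_int Y' * \<omega>) =
      of_int (X*X' - int n*Y*Y') + of_int (X*Y'+X'*Y) * \<omega>" for X Y X' Y'
  proof -
    have "(of_int X + of_int Y * \<omega>) * (of_int X' + of_int Y' * \<omega>) =
      of_int X * of_int X' + of_int Y * of_int Y' * (\<omega> * \<omega>) + (of_int X * of_int Y' + of_int X' * of_int Y) * \<omega>"
      by (simp add: algebra_simps)
    also have "\<dots> = of_int (X*X' - int n*Y*Y') + of_int (X*Y'+X'*Y) * \<omega>" unfolding ww by simp
    finally show ?thesis .
  qed
  have sum: "(of_int X + of_int Y * \<omega>) + (of_int X' + of_int Y' * \<omega>) = of_int (X+X') + of_int (Y+Y') * \<omega>" for X Y X' Y'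
    by (simp add: algebra_simps)
  have neg: "- (of_int X + of_int Y * \<omega>) = of_int (-X) + of_int (-Y) * \<omega>" for X Y
    by simp
  have one: "(1::complex) = of_int 1 + of_int 0 * \<omega>" by simp
  have mulf: "clf_mul (a,b,c,u,v,w) (X + Y*s, Y*t1, Y*t2, Y*t3) (X' + Y'*s, Y'*t1, Y'*t2, Y'*t3)
     = ((X*X' - int n*Y*Y') + (X*Y'+X'*Y)*s, (X*Y'+X'*Y)*t1, (X*Y'+X'*Y)*t2, (X*Y'+X'*Y)*t3)" for X Y X' Y'
    unfolding clf_lin[where a=a and b=b and c=c and u=u and v=v and w=w and x=X and y=Y and s=s
      and ka=t1 and kb=t2 and kc=t3 and x'=X' and y'=Y', folded nr_def T_def, unfolded hs Ts]
    by (simp add: algebra_simps)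
  have ring: "1 \<in> R \<and> (\<forall>z\<in>R. \<forall>z'\<in>R. z + z' \<in> R \<and> z * z' \<in> R \<and> - z \<in> R)"
    unfolding Rd using one sum prod neg by blast
  have inj: "inj_on f R"
  proof (rule inj_onI)
    fix z z' assume "z \<in> R" "z' \<in> R" and fz: "f z = f z'"
    then obtain X Y X' Y' where z: "z = of_int X + of_int Y * \<omega>" and z': "z' = of_int X' + of_int Y' * \<omega>"
      unfolding Rd by blast
    from fz have eq: "X + Y*s = X' + Y'*s" "Y*t1 = Y'*t1" "Y*t2 = Y'*t2" "Y*t3 = Y'*t3"
      unfolding z z' fev by simp_all
    have "Y = Y'" using eq(2-4) tnz by auto
    moreover with eq(1) have "X = X'" by simp
    ultimately show "z = z'" unfolding z z' by simp
  qed
  have f1: "f 1 = clf_one" using fev[of 1 0] one by (simp add: clf_one_def)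
  have hom: "\<forall>z\<in>R. \<forall>z'\<in>R. f (z + z') = clf_add (f z) (f z') \<and> f (z * z') = clf_mul (a,b,c,u,v,w) (f z) (f z')"
  proof (intro ballI)
    fix z z' assume "z \<in> R" "z' \<in> R"
    then obtain X Y X' Y' where z: "z = of_int X + of_int Y * \<omega>" and z': "z' = of_int X' + of_int Y' * \<omega>"
      unfolding Rd by blast
    show "f (z + z') = clf_add (f z) (f z') \<and> f (z * z') = clf_mul (a,b,c,u,v,w) (f z) (f z')"
      unfolding z z' sum prod fev mulf by (simp add: algebra_simps)
  qed
  show ?thesis unfolding clf_oriented_def n_def[symmetric] R_def[symmetric]
    using ring inj f1 hom by blast
qed


theorem mainTheorem6:
  fixes p q :: nat and F :: tform
  assumes "prime p" and "p > 3"
    and "tform_pos_def F" and "tform_disc F = int p"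
    and "prime q" and "16 * q < 3 * p"
  shows "properly_represents F (2 * int q) \<longleftrightarrow>
         (clf_oriented F (order_sqrt (q * p)) \<or> clf_oriented F (order_half (q * p)))"
proof -
  obtain a b c u v w where F: "F = (a,b,c,u,v,w)" by (cases F) auto
  have D: "4*a*b*c + u*v*w - a*u^2 - b*v^2 - c*w^2 = int p" using assms(4) F by simp
  have p0: "p > 0" "p > 2" using assms(2) by auto
  have q0: "q > 0" using assms(5) prime_gt_0_nat by blast
  have n0: "q * p > 0" using p0 q0 by simp
  have nn: "int (q * p) = int q * int p" by simp
  show ?thesis
  proof
    assume "properly_represents F (2 * int q)"
    then obtain x y z where "tform_eval (a,b,c,u,v,w) x y z = 2 * int q"
      unfolding properly_represents_def F by blast
    from fwd[OF D this p0(1) q0] show "clf_oriented F (order_sqrt (q * p)) \<or> clf_oriented F (order_half (q * p))"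
      unfolding F by blast
  next
    assume "clf_oriented F (order_sqrt (q * p)) \<or> clf_oriented F (order_half (q * p))"
    thus "properly_represents F (2 * int q)"
    proof
      assume "clf_oriented F (order_sqrt (q * p))"
      from bwd_sqrt[OF n0 this[unfolded F]] obtain t1 t2 t3 where
        "4*(b*c*t1^2+a*c*t2^2+a*b*t3^2+t1*t2*(u*v-c*w)+t2*t3*(v*w-a*u)+t1*t3*(u*w-b*v)) - (u*t1+v*t2+w*t3)^2 = 4 * int (q*p)"
        by blast
      note N = this[unfolded nn]
      show ?thesis unfolding F by (rule fin[OF assms(1) p0(2) assms(5) D refl disjI2[OF N]])
    next
      assume "clf_oriented F (order_half (q * p))"
      from bwd_half[OF n0 this[unfolded F]] obtain t1 t2 t3 where
        "4*(b*c*t1^2+a*c*t2^2+a*b*t3^2+t1*t2*(u*v-c*w)+t2*t3*(v*w-a*u)+t1*t3*(u*w-b*v)) - (u*t1+v*t2+w*t3)^2 = int (q*p)"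
        by blast
      note N = this[unfolded nn]
      show ?thesis unfolding F by (rule fin[OF assms(1) p0(2) assms(5) D refl disjI1[OF N]])
    qed
  qed
qed

end
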